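(* Let $S$ be training data, $\mathrm{NN}(\{m_l\}_{l=0}^L)$ a fully-connected network, and $\mathcal T_S$ a one-layer lifting to a one-layer deeper $\mathrm{NN}'$. If a parameter $\theta_{\mathrm{shal}}$ of $\mathrm{NN}$ satisfies $\nabla_\theta R_S(\theta_{\mathrm{shal}})=0$, then $\nabla_{\theta'}R_S(\theta'_{\mathrm{deep}})=0$ for every $\theta'_{\mathrm{deep}}\in\mathcal T_S(\theta_{\mathrm{shal}})$.
   Context: $\sigma$ has a non-constant linear segment; $\sigma$ and $\ell(\cdot,y)$ are assigned fixed (sub)derivatives $\sigma'$, $\nabla\ell$ (gradient in first argument) at every point, agreeing with classical derivatives wherever these exist. Network: $\theta=(W^{[1]},b^{[1]},\dots,W^{[L]},b^{[L]})$, $W^{[l]}\in\mathbb R^{m_l\times m_{l-1}}$, $\theta|_l=(W^{[l]},b^{[l]})$; $f^{[0]}_\theta(x)=x$, $f^{[l]}_\theta=\sigma(W^{[l]}f^{[l-1]}_\theta+b^{[l]})$ for hidden $l$, $f_\theta=f^{[L]}_\theta=W^{[L]}f^{[L-1]}_\theta+b^{[L]}$. Data $S=\{(x_i,y_i)\}_{i=1}^n$, $S_x=\{x_i\}$, $\mathbb E_S h=\frac1n\sum_i h(x_i,y_i)$, $R_S(\theta)=\mathbb E_S\ell(f_\theta(x),y)$. Gradient (for any layered network, with "predecessor/successor" following the layer order): $g^{[L]}_\theta=\mathbf 1$, $g^{[l]}_\theta(x)=\sigma'(W^{[l]}f^{[l^-]}_\theta(x)+b^{[l]})$ for hidden $l$;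 $z^{[L]}_\theta(x)=\nabla\ell(f_\theta(x),y)$, $z^{[l]}_\theta=(W^{[l^+]})^\top(z^{[l^+]}_\theta\circ g^{[l^+]}_\theta)$ where $l^-,l^+$ are the predecessor and successor of $l$; $\nabla_{W^{[l]}}R_S=\mathbb E_S[(z^{[l]}_\theta\circ g^{[l]}_\theta)(f^{[l^-]}_\theta)^\top]$, $\nabla_{b^{[l]}}R_S=\mathbb E_S[z^{[l]}_\theta\circ g^{[l]}_\theta]$; $\nabla_\theta R_S(\theta)=0$ means all these vanish. Affine subdomain: open interval $(a,b)$ with $\lambda\ne0,\mu$ such that $\sigma(x)=\lambda x+\mu$ on $(a,b)$. One-layer deeper: $\mathrm{NN}'$ with layers $0,1,\dots,q,\hat q,q+1,\dots,L$ ($q\in\{0,\dots,L-1\}$, $\hat q$ a new hidden layer with activation $\sigma$), $m'_l=m_l$ for $l\ne\hat q$, $m'_{\hat q}\ge\min\{m_q,m_{q+1}\}$. One-layer lifting: $\mathcal T_S(\theta)$ is the set of $\theta'$ with (i) $\theta'|_l=\theta|_l$ for $l\in[q]\cup[q+2:L]$, $(W'^{[\hat q]},b'^{[\hat q]})\in\mathbb R^{m'_{\hat q}\times m_q}\times\mathbb R^{m'_{\hat q}}$, $(W'^{[q+1]},b'^{[q+1]})\in\mathbb R^{m_{q+1}\times m'_{\hat q}}\times\mathbb R^{m_{q+1}}$; (ii) for each $j\in[m'_{\hat q}]$ an affine subdomain $(a_j,b_j)$ with constants $\lambda_j,\mu_j$ such that $(W'^{[\hat q]}f^{[q]}_{\theta'}(x)+b'^{[\hat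 q]})_j\in(a_j,b_j)$ for all $x\in S_x$; (iii) $W'^{[q+1]}\mathrm{diag}(\lambda)W'^{[\hat q]}=W^{[q+1]}$ and $W'^{[q+1]}\mathrm{diag}(\lambda)b'^{[\hat q]}+W'^{[q+1]}\mu+b'^{[q+1]}=b^{[q+1]}$, with $\lambda=(\lambda_j)$, $\mu=(\mu_j)$. *)

theory Defs
  imports "HOL-Analysis.Analysis"
begin

text \<open>Vectors and matrices of varying dimension are represented as functions on nat;
  only the entries inside the stated dimensions are ever read.\<close>
type_synonym vec = "nat \<Rightarrow> real"
type_synonym mat = "nat \<Rightarrow> nat \<Rightarrow> real"

definition affine :: "nat \<Rightarrow> nat \<Rightarrow> mat \<Rightarrow> vec \<Rightarrow> vec \<Rightarrow> vec" where
  "affine m n W b v = (\<lambda>i. if i < m then (\<Sum>j<n. W i j * v j) + b i else 0)"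

text \<open>Fully-connected network with widths ms = [m_0,...,m_L] and parameters
  th = [(W^[1],b^[1]),...,(W^[L],b^[L])] (list index k holds layer k+1).
  fwd ... x l is f^[l](x); the last layer (l = L = length th) is affine.\<close>
primrec fwd :: "(real \<Rightarrow> real) \<Rightarrow> nat list \<Rightarrow> (mat \<times> vec) list \<Rightarrow> vec \<Rightarrow> nat \<Rightarrow> vec" where
  "fwd \<sigma> ms th x 0 = x"
| "fwd \<sigma> ms th x (Suc k) =
     (let u = affine (ms ! Suc k) (ms ! k) (fst (th ! k)) (snd (th ! k)) (fwd \<sigma> ms th x k)
      in if Suc k = length th then u else (\<lambda>i. if i < ms ! Suc k then \<sigma> (u i) else 0))"

definition pre :: "(real \<Rightarrow> real) \<Rightarrow> nat list \<Rightarrow> (mat \<times> vec) list \<Rightarrow> vec \<Rightarrow> nat \<Rightarrow> vec" where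
  "pre \<sigma> ms th x l = affine (ms ! l) (ms ! (l - 1)) (fst (th ! (l - 1))) (snd (th ! (l - 1)))
                        (fwd \<sigma> ms th x (l - 1))"

definition gfac :: "(real \<Rightarrow> real) \<Rightarrow> (real \<Rightarrow> real) \<Rightarrow> nat list \<Rightarrow> (mat \<times> vec) list \<Rightarrow> vec \<Rightarrow> nat \<Rightarrow> vec" where
  "gfac \<sigma> \<sigma>' ms th x l = (if l = length th then (\<lambda>i. 1) else (\<lambda>i. \<sigma>' (pre \<sigma> ms th x l i)))"

text \<open>Backward signals: zr ... d is z^[L-d].\<close>
primrec zr :: "(real \<Rightarrow> real) \<Rightarrow> (real \<Rightarrow> real) \<Rightarrow> (vec \<Rightarrow> 'y \<Rightarrow> vec) \<Rightarrow> nat list \<Rightarrow>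
               (mat \<times> vec) list \<Rightarrow> vec \<Rightarrow> 'y \<Rightarrow> nat \<Rightarrow> vec" where
  "zr \<sigma> \<sigma>' dl ms th x y 0 = dl (fwd \<sigma> ms th x (length th)) y"
| "zr \<sigma> \<sigma>' dl ms th x y (Suc d) =
     (let l = length th - d in
      (\<lambda>j. \<Sum>i< ms ! l. fst (th ! (l - 1)) i j * (zr \<sigma> \<sigma>' dl ms th x y d i * gfac \<sigma> \<sigma>' ms th x l i)))"

definition zv :: "(real \<Rightarrow> real) \<Rightarrow> (real \<Rightarrow> real) \<Rightarrow> (vec \<Rightarrow> 'y \<Rightarrow> vec) \<Rightarrow> nat list \<Rightarrow>
               (mat \<times> vec) list \<Rightarrow> vec \<Rightarrow> 'y \<Rightarrow> nat \<Rightarrow> vec" where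
  "zv \<sigma> \<sigma>' dl ms th x y l = zr \<sigma> \<sigma>' dl ms th x y (length th - l)"

definition avg :: "(vec \<times> 'y) list \<Rightarrow> (vec \<Rightarrow> 'y \<Rightarrow> real) \<Rightarrow> real" where
  "avg S h = (\<Sum>p\<leftarrow>S. h (fst p) (snd p)) / real (length S)"

definition critical :: "(real \<Rightarrow> real) \<Rightarrow> (real \<Rightarrow> real) \<Rightarrow> (vec \<Rightarrow> 'y \<Rightarrow> vec) \<Rightarrow> nat list \<Rightarrow>
                        (mat \<times> vec) list \<Rightarrow> (vec \<times> 'y) list \<Rightarrow> bool" where
  "critical \<sigma> \<sigma>' dl ms th S \<longleftrightarrow>
     (\<forall>l\<in>{1..length th}.
        (\<forall>i < ms ! l. \<forall>j < ms ! (l - 1).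
           avg S (\<lambda>x y. zv \<sigma> \<sigma>' dl ms th x y l i * gfac \<sigma> \<sigma>' ms th x l i * fwd \<sigma> ms th x (l - 1) j) = 0)
      \<and> (\<forall>i < ms ! l.
           avg S (\<lambda>x y. zv \<sigma> \<sigma>' dl ms th x y l i * gfac \<sigma> \<sigma>' ms th x l i) = 0))"

definition deeper_dims :: "nat list \<Rightarrow> nat \<Rightarrow> nat \<Rightarrow> nat list" where
  "deeper_dims ms q mh = take (Suc q) ms @ [mh] @ drop (Suc q) ms"

definition layer_eq :: "nat \<Rightarrow> nat \<Rightarrow> mat \<times> vec \<Rightarrow> mat \<times> vec \<Rightarrow> bool" where
  "layer_eq m n p p' \<longleftrightarrow> (\<forall>i<m. (\<forall>j<n. fst p i j = fst p' i j) \<and> snd p i = snd p' i)"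

text \<open>One-layer lifting T_S(theta). In the list theta', index k<q holds layer k+1,
  index q holds layer q-hat, index q+1 holds layer q+1, index k+1 (k>=q+1) holds layer k+1.\<close>
definition lifting :: "(real \<Rightarrow> real) \<Rightarrow> nat list \<Rightarrow> (vec \<times> 'y) list \<Rightarrow> nat \<Rightarrow> nat \<Rightarrow>
                       (mat \<times> vec) list \<Rightarrow> (mat \<times> vec) list set" where
  "lifting \<sigma> ms S q mh th =
    {th'. length th' = Suc (length th)
      \<and> (\<forall>k<q. layer_eq (ms ! Suc k) (ms ! k) (th' ! k) (th ! k))
      \<and> (\<forall>k. Suc q \<le> k \<and> k < length th \<longrightarrow> layer_eq (ms ! Suc k) (ms ! k) (th' ! Suc k) (th ! k))
      \<and> (\<exists>lam mu :: nat \<Rightarrow> real.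
           (\<forall>j<mh. \<exists>a b. a < b \<and> lam j \<noteq> 0 \<and> (\<forall>t. a < t \<and> t < b \<longrightarrow> \<sigma> t = lam j * t + mu j)
                 \<and> (\<forall>x\<in>fst ` set S. a < pre \<sigma> (deeper_dims ms q mh) th' x (Suc q) j
                                    \<and> pre \<sigma> (deeper_dims ms q mh) th' x (Suc q) j < b))
         \<and> (\<forall>i < ms ! Suc q. \<forall>k < ms ! q.
              (\<Sum>j<mh. fst (th' ! Suc q) i j * lam j * fst (th' ! q) j k) = fst (th ! q) i k)
         \<and> (\<forall>i < ms ! Suc q.
              (\<Sum>j<mh. fst (th' ! Suc q) i j * lam j * snd (th' ! q) j)
              + (\<Sum>j<mh. fst (th' ! Suc q) i j * mu j) + snd (th' ! Suc q) i = snd (th ! q) i))}"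

text \<open>G is the classical (Frechet) gradient at v of f restricted to R^m
  (vectors supported on the first m coordinates).\<close>
definition grad_at :: "(vec \<Rightarrow> real) \<Rightarrow> nat \<Rightarrow> vec \<Rightarrow> vec \<Rightarrow> bool" where
  "grad_at f m v G \<longleftrightarrow>
     (\<forall>e>0. \<exists>d>0. \<forall>h. (\<forall>i\<ge>m. h i = 0) \<and> sqrt (\<Sum>i<m. (h i)\<^sup>2) < d \<longrightarrow>
        \<bar>f (\<lambda>i. v i + h i) - f v - (\<Sum>i<m. G i * h i)\<bar> \<le> e * sqrt (\<Sum>i<m. (h i)\<^sup>2))"

end

theory Submission imports Defs begin

lemma affine_cong: "layer_eq m n p p' \<Longrightarrow> affine m n (fst p) (snd p) v = affine m n (fst p') (snd p') v"
  unfolding affine_def layer_eq_def by (auto intro!: ext sum.cong)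

lemma affine_cong_v: "(\<forall>j<n. v j = v' j) \<Longrightarrow> affine m n W b v = affine m n W b v'"
  unfolding affine_def by (auto intro!: ext sum.cong)

lemma fwd_Suc: "fwd \<sigma> ms th x (Suc k) = (if Suc k = length th then pre \<sigma> ms th x (Suc k)
   else (\<lambda>i. if i < ms!Suc k then \<sigma> (pre \<sigma> ms th x (Suc k) i) else 0))"
  unfolding fwd.simps pre_def by (simp only: Let_def diff_Suc_1)

lemma zv_rec: "l < length th \<Longrightarrow> zv \<sigma> \<sigma>' dl ms th x y l = (\<lambda>j. \<Sum>i<ms!Suc l. fst (th!l) i j *
   (zv \<sigma> \<sigma>' dl ms th x y (Suc l) i * gfac \<sigma> \<sigma>' ms th x (Suc l) i))"
proof -
  assume a: "l < length th"
  define d where "d = length th - Suc l"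
  have d1: "length th - l = Suc d" and d2: "length th - d = Suc l" using a by (auto simp: d_def)
  show ?thesis by (simp add: zv_def d1 d2 Let_def, simp add: d_def)
qed

lemma zv_top: "zv \<sigma> \<sigma>' dl ms th x y (length th) = dl (fwd \<sigma> ms th x (length th)) y"
  by (simp add: zv_def)

lemma avg_cong: "(\<And>x y. (x,y) \<in> set S \<Longrightarrow> h x y = h' x y) \<Longrightarrow> avg S h = avg S h'"
proof -
  assume a: "\<And>x y. (x,y) \<in> set S \<Longrightarrow> h x y = h' x y"
  have "(\<Sum>p\<leftarrow>S. h (fst p) (snd p)) = (\<Sum>p\<leftarrow>S. h' (fst p) (snd p))"
    by (intro arg_cong[where f=sum_list] map_cong) (auto intro: a)
  then show ?thesis by (simp add: avg_def)
qed

lemma sl_sum: "finite A \<Longrightarrow> (\<Sum>p\<leftarrow>S. \<Sum>k\<in>A. f k p) = (\<Sum>k\<in>A. (\<Sum>p\<leftarrow>S. f k p::real))"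
  by (induction S) (auto simp: sum.distrib)

lemma avg_sum: "finite A \<Longrightarrow> avg S (\<lambda>x y. \<Sum>k\<in>A. f k x y) = (\<Sum>k\<in>A. avg S (f k))"
  by (simp add: avg_def sl_sum sum_divide_distrib)

lemma avg_mult: "avg S (\<lambda>x y. c * h x y) = c * avg S h"
  by (simp add: avg_def sum_list_const_mult)

lemma avg_add: "avg S (\<lambda>x y. f x y + g x y) = avg S f + avg S g"
  by (simp add: avg_def sum_list_addf add_divide_distrib)

lemma sigma'_lin:
  assumes "\<And>t. \<sigma> differentiable (at t) \<Longrightarrow> (\<sigma> has_real_derivative \<sigma>' t) (at t)"
    and "a < t" "t < b" "\<forall>s. a < s \<and> s < b \<longrightarrow> \<sigma> s = c * s + d"
  shows "\<sigma>' t = c"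
proof -
  have "((\<lambda>u. c * u + d) has_real_derivative c) (at t)" by (auto intro!: derivative_eq_intros)
  then have D: "(\<sigma> has_real_derivative c) (at t)"
    by (rule has_field_derivative_transform_within_open[where S="{a<..<b}"]) (use assms in auto)
  then have "\<sigma> differentiable (at t)" using real_differentiable_def by blast
  then have "(\<sigma> has_real_derivative \<sigma>' t) (at t)" using assms(1) by blast
  then show ?thesis using D DERIV_unique by blast
qed

lemma dd:
  assumes "length ms = Suc L" "q < L"
  shows "k \<le> q \<Longrightarrow> deeper_dims ms q mh ! k = ms ! k"
    and "deeper_dims ms q mh ! Suc q = mh"
    and "Suc q \<le> k \<Longrightarrow> k < length ms \<Longrightarrow> deeper_dims ms q mh ! Suc k = ms ! k"
    and "length (deeper_dims ms q mh) = Suc (Suc L)"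
  using assms by (auto simp: deeper_dims_def nth_append min_def Suc_diff_le)

lemma comp_alg:
  fixes A lam mu c :: "nat \<Rightarrow> real" and B :: "nat \<Rightarrow> nat \<Rightarrow> real"
  assumes "\<forall>k<n. (\<Sum>j<mh. A j * lam j * B j k) = W k"
    and "(\<Sum>j<mh. A j * lam j * c j) + (\<Sum>j<mh. A j * mu j) + bb = bz"
  shows "(\<Sum>j<mh. A j * (if j < mh then lam j * ((\<Sum>k<n. B j k * f k) + c j) + mu j else 0)) + bb
     = (\<Sum>k<n. W k * f k) + bz"
proof -
  have "(\<Sum>j<mh. A j * (if j < mh then lam j * ((\<Sum>k<n. B j k * f k) + c j) + mu j else 0))
     = (\<Sum>j<mh. (\<Sum>k<n. A j * lam j * B j k * f k) + A j * lam j * c j + A j * mu j)"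
    by (rule sum.cong) (auto simp: algebra_simps sum_distrib_left)
  also have "\<dots> = (\<Sum>j<mh. \<Sum>k<n. A j * lam j * B j k * f k) + (\<Sum>j<mh. A j * lam j * c j) + (\<Sum>j<mh. A j * mu j)"
    by (simp add: sum.distrib)
  also have "(\<Sum>j<mh. \<Sum>k<n. A j * lam j * B j k * f k) = (\<Sum>k<n. (\<Sum>j<mh. A j * lam j * B j k) * f k)"
    by (subst sum.swap) (simp add: sum_distrib_right)
  also have "\<dots> = (\<Sum>k<n. W k * f k)" using assms(1) by (intro sum.cong) auto
  finally show ?thesis using assms(2) by simp
qed

lemma comp_alg2:
  fixes A :: "nat \<Rightarrow> nat \<Rightarrow> real" and lam B z :: "nat \<Rightarrow> real"
  assumes "\<forall>i<m. (\<Sum>h<mh. A i h * lam h * B h) = W i"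
  shows "(\<Sum>h<mh. B h * ((\<Sum>i<m. A i h * z i) * lam h)) = (\<Sum>i<m. W i * z i)"
proof -
  have "(\<Sum>h<mh. B h * ((\<Sum>i<m. A i h * z i) * lam h)) = (\<Sum>h<mh. \<Sum>i<m. A i h * lam h * B h * z i)"
    by (rule sum.cong) (auto simp: algebra_simps sum_distrib_left sum_distrib_right)
  also have "\<dots> = (\<Sum>i<m. (\<Sum>h<mh. A i h * lam h * B h) * z i)"
    by (subst sum.swap) (simp add: sum_distrib_right)
  also have "\<dots> = (\<Sum>i<m. W i * z i)" using assms by (intro sum.cong) auto
  finally show ?thesis .
qed


theorem proposition2:
  fixes \<sigma> \<sigma>' :: "real \<Rightarrow> real"
    and loss :: "vec \<Rightarrow> 'y \<Rightarrow> real" and dl :: "vec \<Rightarrow> 'y \<Rightarrow> vec"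
    and ms :: "nat list" and th th' :: "(mat \<times> vec) list"
    and S :: "(vec \<times> 'y) list" and q mh :: nat
  assumes lin_seg: "\<exists>a b lam mu. a < b \<and> lam \<noteq> 0 \<and> (\<forall>t. a < t \<and> t < b \<longrightarrow> \<sigma> t = lam * t + mu)"
    and sigma_deriv: "\<And>t. \<sigma> differentiable (at t) \<Longrightarrow> (\<sigma> has_real_derivative \<sigma>' t) (at t)"
    and loss_grad: "\<And>y v G. (\<forall>i\<ge>last ms. v i = 0) \<Longrightarrow> grad_at (\<lambda>u. loss u y) (last ms) v G
                      \<Longrightarrow> \<forall>i < last ms. dl v y i = G i"
    and L_pos: "length ms \<ge> 2"
    and th_len: "length th = length ms - 1"
    and q_lt: "q < length th"
    and mh_ge: "mh \<ge> min (ms ! q) (ms ! Suc q)"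
    and crit: "critical \<sigma> \<sigma>' dl ms th S"
    and lift: "th' \<in> lifting \<sigma> ms S q mh th"
  shows "critical \<sigma> \<sigma>' dl (deeper_dims ms q mh) th' S"
proof -
  define L where "L = length th"
  define ms' where "ms' = deeper_dims ms q mh"
  define X where "X = fst ` set S"
  have qL: "q < L" using q_lt L_def by simp
  have lms: "length ms = Suc L" using L_pos th_len L_def by simp
  note D = dd[OF lms qL, where mh=mh, folded ms'_def]
  from lift obtain lam mu where len': "length th' = Suc L"
    and lo: "\<forall>k<q. layer_eq (ms ! Suc k) (ms ! k) (th' ! k) (th ! k)"
    and hi: "\<forall>k. Suc q \<le> k \<and> k < L \<longrightarrow> layer_eq (ms ! Suc k) (ms ! k) (th' ! Suc k) (th ! k)"
    and hat: "\<forall>j<mh. \<exists>a b. a < b \<and> lam j \<noteq> 0 \<and> (\<forall>t. a < t \<and> t < b \<longrightarrow> \<sigma> t = lam j * t + mu j)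
                 \<and> (\<forall>x\<in>X. a < pre \<sigma> ms' th' x (Suc q) j \<and> pre \<sigma> ms' th' x (Suc q) j < b)"
    and Wc: "\<forall>i < ms ! Suc q. \<forall>k < ms ! q.
              (\<Sum>j<mh. fst (th' ! Suc q) i j * lam j * fst (th' ! q) j k) = fst (th ! q) i k"
    and bc: "\<forall>i < ms ! Suc q.
              (\<Sum>j<mh. fst (th' ! Suc q) i j * lam j * snd (th' ! q) j)
              + (\<Sum>j<mh. fst (th' ! Suc q) i j * mu j) + snd (th' ! Suc q) i = snd (th ! q) i"
    unfolding lifting_def L_def ms'_def X_def by blast
  have F_lo: "fwd \<sigma> ms' th' x k = fwd \<sigma> ms th x k" if "k \<le> q" for x k
    using that
  proof (induction k)
    case 0 then show ?case by simp
  next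
    case (Suc k)
    have kq: "k < q" using Suc by simp
    have A: "affine (ms ! Suc k) (ms ! k) (fst (th' ! k)) (snd (th' ! k)) v
           = affine (ms ! Suc k) (ms ! k) (fst (th ! k)) (snd (th ! k)) v" for v
      using affine_cong lo kq by blast
    show ?case using Suc kq qL len' D(1)[of k] D(1)[of "Suc k"] A
      by (simp add: Let_def L_def)
  qed
  have F_hat: "fwd \<sigma> ms' th' x (Suc q) = (\<lambda>i. if i < mh then \<sigma> (pre \<sigma> ms' th' x (Suc q) i) else 0)" for x
    by (subst fwd_Suc) (use len' qL D(2) in simp)
  have P_eq: "pre \<sigma> ms' th' x (Suc q) = affine mh (ms!q) (fst (th'!q)) (snd (th'!q)) (fwd \<sigma> ms th x q)" for x
    by (simp add: pre_def D F_lo)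
  have hatv: "\<sigma> (pre \<sigma> ms' th' x (Suc q) j) = lam j * pre \<sigma> ms' th' x (Suc q) j + mu j
       \<and> \<sigma>' (pre \<sigma> ms' th' x (Suc q) j) = lam j" if xX: "x \<in> X" and jm: "j < mh" for x j
  proof -
    obtain a b where ab: "\<forall>t. a < t \<and> t < b \<longrightarrow> \<sigma> t = lam j * t + mu j"
      "a < pre \<sigma> ms' th' x (Suc q) j" "pre \<sigma> ms' th' x (Suc q) j < b"
      using hat xX jm by blast
    show ?thesis using ab sigma'_lin[OF sigma_deriv, of a _ b] by blast
  qed
  have F_hat2: "fwd \<sigma> ms' th' x (Suc q) = (\<lambda>j. if j < mh then lam j * pre \<sigma> ms' th' x (Suc q) j + mu j else 0)"
    if "x \<in> X" for x
    unfolding F_hat using hatv[OF that] by (intro ext) simp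
  have P2: "pre \<sigma> ms' th' x (Suc (Suc q)) = pre \<sigma> ms th x (Suc q)" if "x \<in> X" for x
  proof -
    have "pre \<sigma> ms' th' x (Suc (Suc q)) = affine (ms ! Suc q) mh (fst (th' ! Suc q)) (snd (th' ! Suc q))
           (fwd \<sigma> ms' th' x (Suc q))"
      using D(2) D(3)[of "Suc q"] qL lms by (simp add: pre_def)
    also have "\<dots> = affine (ms ! Suc q) (ms ! q) (fst (th ! q)) (snd (th ! q)) (fwd \<sigma> ms th x q)"
      unfolding affine_def F_hat2[OF that] P_eq
    proof (rule ext)
      fix i
      show "(if i < ms ! Suc q then (\<Sum>j<mh. fst (th' ! Suc q) i j *
            (if j < mh then lam j * (if j < mh then (\<Sum>k<ms ! q. fst (th' ! q) j k * fwd \<sigma> ms th x q k) + snd (th' ! q) j else 0) + mu j else 0)) +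
           snd (th' ! Suc q) i else 0) =
          (if i < ms ! Suc q then (\<Sum>j<ms ! q. fst (th ! q) i j * fwd \<sigma> ms th x q j) + snd (th ! q) i else 0)"
      proof (cases "i < ms ! Suc q")
        case True
        have "(\<Sum>j<mh. fst (th' ! Suc q) i j *
            (if j < mh then lam j * (if j < mh then (\<Sum>k<ms ! q. fst (th' ! q) j k * fwd \<sigma> ms th x q k) + snd (th' ! q) j else 0) + mu j else 0))
          = (\<Sum>j<mh. fst (th' ! Suc q) i j *
            (if j < mh then lam j * ((\<Sum>k<ms ! q. fst (th' ! q) j k * fwd \<sigma> ms th x q k) + snd (th' ! q) j) + mu j else 0))"
          by (rule sum.cong) auto
        note E1 = this
        have E2: "(\<Sum>j<mh. fst (th' ! Suc q) i j *
            (if j < mh then lam j * ((\<Sum>k<ms ! q. fst (th' ! q) j k * fwd \<sigma> ms th x q k) + snd (th' ! q) j) + mu j else 0)) + snd (th' ! Suc q) i = (\<Sum>j<ms ! q. fst (th ! q) i j * fwd \<sigma> ms th x q j) + snd (th ! q) i"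
          apply (rule comp_alg[where A="fst (th'!Suc q) i" and lam=lam and B="fst (th'!q)" and W="fst (th!q) i"
            and c="snd (th'!q)" and mu=mu and bb="snd (th'!Suc q) i" and bz="snd (th!q) i" and n="ms!q"
            and mh=mh and f="fwd \<sigma> ms th x q"])
           apply (intro allI impI, rule Wc[rule_format, OF True], assumption)
          by (rule bc[rule_format, OF True])
        have E: "(\<Sum>j<mh. fst (th' ! Suc q) i j *
            (if j < mh then lam j * (if j < mh then (\<Sum>k<ms ! q. fst (th' ! q) j k * fwd \<sigma> ms th x q k) + snd (th' ! q) j else 0) + mu j else 0)) +
           snd (th' ! Suc q) i = (\<Sum>j<ms ! q. fst (th ! q) i j * fwd \<sigma> ms th x q j) + snd (th ! q) i"
          using E2 unfolding E1[symmetric] .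
        show ?thesis unfolding if_P[OF True] by (rule E)
      next
        case False
        show ?thesis unfolding if_not_P[OF False] by (rule refl)
      qed
    qed
    also have "\<dots> = pre \<sigma> ms th x (Suc q)" by (simp add: pre_def)
    finally show ?thesis .
  qed

  have F_mid: "fwd \<sigma> ms' th' x (Suc k) = fwd \<sigma> ms th x k \<and> pre \<sigma> ms' th' x (Suc k) = pre \<sigma> ms th x k"
    if xX: "x \<in> X" and kq: "Suc q \<le> k" and kL: "k \<le> L" for x k
    using kq kL
  proof (induction k rule: dec_induct)
    case base
    have pe: "pre \<sigma> ms' th' x (Suc (Suc q)) = pre \<sigma> ms th x (Suc q)" by (rule P2[OF xX])
    have "fwd \<sigma> ms' th' x (Suc (Suc q)) = fwd \<sigma> ms th x (Suc q)"
      unfolding fwd_Suc[of \<sigma> ms' th'] fwd_Suc[of \<sigma> ms th]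
      using D(3)[of "Suc q"] lms len' qL by (simp only: pe len' nat.inject L_def; simp)
    then show ?case using pe by simp
  next
    case (step n)
    have IH: "fwd \<sigma> ms' th' x (Suc n) = fwd \<sigma> ms th x n" using step by simp
    have nL: "n < L" using step by simp
    have A: "affine (ms ! Suc n) (ms ! n) (fst (th' ! Suc n)) (snd (th' ! Suc n)) v
           = affine (ms ! Suc n) (ms ! n) (fst (th ! n)) (snd (th ! n)) v" for v
      using affine_cong hi step nL by blast
    have pe: "pre \<sigma> ms' th' x (Suc (Suc n)) = pre \<sigma> ms th x (Suc n)"
      using D(3)[of "Suc n"] D(3)[of n] step lms nL A IH by (simp add: pre_def)
    have "fwd \<sigma> ms' th' x (Suc (Suc n)) = fwd \<sigma> ms th x (Suc n)"
      unfolding fwd_Suc[of \<sigma> ms' th'] fwd_Suc[of \<sigma> ms th]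
      using D(3)[of "Suc n"] lms len' nL step(1) by (simp only: pe len' nat.inject L_def; simp)
    then show ?case using pe by simp
  qed
  have G_lo: "gfac \<sigma> \<sigma>' ms' th' x l = gfac \<sigma> \<sigma>' ms th x l" if l1: "1 \<le> l" and lq: "l \<le> q" for x l
  proof -
    obtain l0 where l0: "l = Suc l0" using l1 by (cases l) auto
    have A: "affine (ms ! Suc l0) (ms ! l0) (fst (th' ! l0)) (snd (th' ! l0)) v
           = affine (ms ! Suc l0) (ms ! l0) (fst (th ! l0)) (snd (th ! l0)) v" for v
      using affine_cong lo lq l0 by (metis Suc_le_lessD)
    have "pre \<sigma> ms' th' x l = pre \<sigma> ms th x l"
      using D(1)[of l] D(1)[of l0] lq l0 A F_lo[of l0 x] by (simp add: pre_def)
    then show ?thesis using lq qL len' by (simp add: gfac_def L_def)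
  qed
  have G_hat: "gfac \<sigma> \<sigma>' ms' th' x (Suc q) j = lam j" if "x \<in> X" "j < mh" for x j
    using hatv[OF that] qL len' by (simp add: gfac_def)
  have G_hi: "gfac \<sigma> \<sigma>' ms' th' x (Suc k) = gfac \<sigma> \<sigma>' ms th x k" if "x \<in> X" "Suc q \<le> k" "k \<le> L" for x k
    using F_mid[OF that] len' by (simp add: gfac_def L_def)
  have Z_hi: "\<forall>i<ms!k. zv \<sigma> \<sigma>' dl ms' th' x y (Suc k) i = zv \<sigma> \<sigma>' dl ms th x y k i"
    if xX: "x \<in> X" and kL: "k \<le> L" and kq: "Suc q \<le> k" for x y k
    using kL kq
  proof (induction k rule: inc_induct)
    case base
    have "fwd \<sigma> ms' th' x (Suc L) = fwd \<sigma> ms th x L" using F_mid[OF xX] qL by simp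
    then show ?case using zv_top[of \<sigma> \<sigma>' dl ms' th' x y] zv_top[of \<sigma> \<sigma>' dl ms th x y] len'
      by (simp add: L_def)
  next
    case (step n)
    have nL: "n < L" and qn: "Suc q \<le> n" using step by auto
    have IH: "\<forall>i<ms!Suc n. zv \<sigma> \<sigma>' dl ms' th' x y (Suc (Suc n)) i = zv \<sigma> \<sigma>' dl ms th x y (Suc n) i"
      using step qn by simp
    have W: "fst (th' ! Suc n) i j = fst (th ! n) i j" if "i < ms ! Suc n" "j < ms ! n" for i j
      using hi qn nL that unfolding layer_eq_def by blast
    have G: "gfac \<sigma> \<sigma>' ms' th' x (Suc (Suc n)) = gfac \<sigma> \<sigma>' ms th x (Suc n)"
      using G_hi[OF xX, of "Suc n"] qn nL by simp
    have m: "ms' ! Suc (Suc n) = ms ! Suc n" using D(3)[of "Suc n"] qn nL lms by simp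
    show ?case
    proof (intro allI impI)
      fix j assume j: "j < ms ! n"
      have "zv \<sigma> \<sigma>' dl ms' th' x y (Suc n) j = (\<Sum>i<ms' ! Suc (Suc n). fst (th' ! Suc n) i j *
          (zv \<sigma> \<sigma>' dl ms' th' x y (Suc (Suc n)) i * gfac \<sigma> \<sigma>' ms' th' x (Suc (Suc n)) i))"
        using zv_rec[of "Suc n" th' \<sigma> \<sigma>' dl ms' x y] len' nL by simp
      also have "\<dots> = (\<Sum>i<ms ! Suc n. fst (th ! n) i j *
          (zv \<sigma> \<sigma>' dl ms th x y (Suc n) i * gfac \<sigma> \<sigma>' ms th x (Suc n) i))"
        unfolding m G by (rule sum.cong) (use W IH j in auto)
      also have "\<dots> = zv \<sigma> \<sigma>' dl ms th x y n j"
        using zv_rec[of n th \<sigma> \<sigma>' dl ms x y] nL by (simp add: L_def)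
      finally show "zv \<sigma> \<sigma>' dl ms' th' x y (Suc n) j = zv \<sigma> \<sigma>' dl ms th x y n j" .
    qed
  qed
  have Z_hat: "zv \<sigma> \<sigma>' dl ms' th' x y (Suc q) j = (\<Sum>i<ms ! Suc q. fst (th' ! Suc q) i j *
          (zv \<sigma> \<sigma>' dl ms th x y (Suc q) i * gfac \<sigma> \<sigma>' ms th x (Suc q) i))" if xX: "x \<in> X" for x y j
  proof -
    have m: "ms' ! Suc (Suc q) = ms ! Suc q" using D(3)[of "Suc q"] qL lms by simp
    have G: "gfac \<sigma> \<sigma>' ms' th' x (Suc (Suc q)) = gfac \<sigma> \<sigma>' ms th x (Suc q)"
      using G_hi[OF xX, of "Suc q"] qL by simp
    have Z: "\<forall>i<ms!Suc q. zv \<sigma> \<sigma>' dl ms' th' x y (Suc (Suc q)) i = zv \<sigma> \<sigma>' dl ms th x y (Suc q) i"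
      using Z_hi[OF xX, of "Suc q" y] qL by simp
    have "zv \<sigma> \<sigma>' dl ms' th' x y (Suc q) j = (\<Sum>i<ms' ! Suc (Suc q). fst (th' ! Suc q) i j *
          (zv \<sigma> \<sigma>' dl ms' th' x y (Suc (Suc q)) i * gfac \<sigma> \<sigma>' ms' th' x (Suc (Suc q)) i))"
      using zv_rec[of "Suc q" th' \<sigma> \<sigma>' dl ms' x y] len' qL by simp
    also have "\<dots> = (\<Sum>i<ms ! Suc q. fst (th' ! Suc q) i j *
          (zv \<sigma> \<sigma>' dl ms th x y (Suc q) i * gfac \<sigma> \<sigma>' ms th x (Suc q) i))"
      unfolding m G by (rule sum.cong) (use Z in auto)
    finally show ?thesis .
  qed
  have Z_q: "zv \<sigma> \<sigma>' dl ms' th' x y q j = zv \<sigma> \<sigma>' dl ms th x y q j" if xX: "x \<in> X" and j: "j < ms ! q" for x y j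
  proof -
    have "zv \<sigma> \<sigma>' dl ms' th' x y q j = (\<Sum>h<ms' ! Suc q. fst (th' ! q) h j *
          (zv \<sigma> \<sigma>' dl ms' th' x y (Suc q) h * gfac \<sigma> \<sigma>' ms' th' x (Suc q) h))"
      using zv_rec[of q th' \<sigma> \<sigma>' dl ms' x y] len' qL by simp
    also have "\<dots> = (\<Sum>h<mh. fst (th' ! q) h j * ((\<Sum>i<ms ! Suc q. fst (th' ! Suc q) i h *
          (zv \<sigma> \<sigma>' dl ms th x y (Suc q) i * gfac \<sigma> \<sigma>' ms th x (Suc q) i)) * lam h))"
      unfolding D(2) by (rule sum.cong) (use Z_hat[OF xX] G_hat[OF xX] in auto)
    also have "\<dots> = (\<Sum>i<ms ! Suc q. fst (th ! q) i j *
          (zv \<sigma> \<sigma>' dl ms th x y (Suc q) i * gfac \<sigma> \<sigma>' ms th x (Suc q) i))"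
      by (rule comp_alg2) (use Wc j in auto)
    also have "\<dots> = zv \<sigma> \<sigma>' dl ms th x y q j"
      using zv_rec[of q th \<sigma> \<sigma>' dl ms x y] qL by (simp add: L_def)
    finally show ?thesis .
  qed
  have Z_lo: "\<forall>j<ms!k. zv \<sigma> \<sigma>' dl ms' th' x y k j = zv \<sigma> \<sigma>' dl ms th x y k j"
    if xX: "x \<in> X" and kq: "k \<le> q" for x y k
    using kq
  proof (induction k rule: inc_induct)
    case base
    then show ?case using Z_q[OF xX] by blast
  next
    case (step n)
    have nq: "n < q" using step by simp
    have IH: "\<forall>i<ms!Suc n. zv \<sigma> \<sigma>' dl ms' th' x y (Suc n) i = zv \<sigma> \<sigma>' dl ms th x y (Suc n) i"
      using step by simp
    have W: "fst (th' ! n) i j = fst (th ! n) i j" if "i < ms ! Suc n" "j < ms ! n" for i j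
      using lo nq that unfolding layer_eq_def by blast
    have G: "gfac \<sigma> \<sigma>' ms' th' x (Suc n) = gfac \<sigma> \<sigma>' ms th x (Suc n)"
      using G_lo[of "Suc n" x] nq by simp
    have m: "ms' ! Suc n = ms ! Suc n" using D(1)[of "Suc n"] nq by simp
    show ?case
    proof (intro allI impI)
      fix j assume j: "j < ms ! n"
      have "zv \<sigma> \<sigma>' dl ms' th' x y n j = (\<Sum>i<ms' ! Suc n. fst (th' ! n) i j *
          (zv \<sigma> \<sigma>' dl ms' th' x y (Suc n) i * gfac \<sigma> \<sigma>' ms' th' x (Suc n) i))"
        using zv_rec[of n th' \<sigma> \<sigma>' dl ms' x y] len' nq qL by simp
      also have "\<dots> = (\<Sum>i<ms ! Suc n. fst (th ! n) i j *
          (zv \<sigma> \<sigma>' dl ms th x y (Suc n) i * gfac \<sigma> \<sigma>' ms th x (Suc n) i))"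
        unfolding m G by (rule sum.cong) (use W IH j in auto)
      also have "\<dots> = zv \<sigma> \<sigma>' dl ms th x y n j"
        using zv_rec[of n th \<sigma> \<sigma>' dl ms x y] nq qL by (simp add: L_def)
      finally show "zv \<sigma> \<sigma>' dl ms' th' x y n j = zv \<sigma> \<sigma>' dl ms th x y n j" .
    qed
  qed

  have critW: "avg S (\<lambda>x y. zv \<sigma> \<sigma>' dl ms th x y l i * gfac \<sigma> \<sigma>' ms th x l i * fwd \<sigma> ms th x (l - 1) j) = 0"
    if "1 \<le> l" "l \<le> L" "i < ms!l" "j < ms!(l-1)" for l i j
    using crit that unfolding critical_def L_def by auto
  have critB: "avg S (\<lambda>x y. zv \<sigma> \<sigma>' dl ms th x y l i * gfac \<sigma> \<sigma>' ms th x l i) = 0"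
    if "1 \<le> l" "l \<le> L" "i < ms!l" for l i
    using crit that unfolding critical_def L_def by auto
  have inX: "x \<in> X" if "(x,y) \<in> set S" for x y using that X_def by force
  have goal: "(\<forall>i<ms'!l. \<forall>j<ms'!(l-1). avg S (\<lambda>x y. zv \<sigma> \<sigma>' dl ms' th' x y l i * gfac \<sigma> \<sigma>' ms' th' x l i * fwd \<sigma> ms' th' x (l - 1) j) = 0)
     \<and> (\<forall>i<ms'!l. avg S (\<lambda>x y. zv \<sigma> \<sigma>' dl ms' th' x y l i * gfac \<sigma> \<sigma>' ms' th' x l i) = 0)"
    if l1: "1 \<le> l" and lL: "l \<le> Suc L" for l
  proof -
    consider (lo) "l \<le> q" | (hat) "l = Suc q" | (hi) k where "l = Suc k" "Suc q \<le> k" "k \<le> L"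
      using l1 lL by (cases l) force+
    then show ?thesis
    proof cases
      case lo
      have m1: "ms' ! l = ms ! l" and m2: "ms' ! (l - 1) = ms ! (l - 1)" using D(1) lo by auto
      have eqs: "zv \<sigma> \<sigma>' dl ms' th' x y l i = zv \<sigma> \<sigma>' dl ms th x y l i
          \<and> gfac \<sigma> \<sigma>' ms' th' x l = gfac \<sigma> \<sigma>' ms th x l \<and> fwd \<sigma> ms' th' x (l - 1) = fwd \<sigma> ms th x (l - 1)"
        if "(x,y) \<in> set S" "i < ms ! l" for x y i
        using Z_lo[OF inX[OF that(1)] lo, of y] that(2) G_lo[OF l1 lo, of x] F_lo[of "l - 1" x] lo by simp
      show ?thesis unfolding m1 m2
      proof (intro conjI allI impI)
        fix i j assume i: "i < ms ! l" and j: "j < ms ! (l - 1)"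
        have "avg S (\<lambda>x y. zv \<sigma> \<sigma>' dl ms' th' x y l i * gfac \<sigma> \<sigma>' ms' th' x l i * fwd \<sigma> ms' th' x (l - 1) j)
          = avg S (\<lambda>x y. zv \<sigma> \<sigma>' dl ms th x y l i * gfac \<sigma> \<sigma>' ms th x l i * fwd \<sigma> ms th x (l - 1) j)"
          by (rule avg_cong) (use eqs i in simp)
        also have "\<dots> = 0" using critW[OF l1 _ i j] lo qL by simp
        finally show "avg S (\<lambda>x y. zv \<sigma> \<sigma>' dl ms' th' x y l i * gfac \<sigma> \<sigma>' ms' th' x l i * fwd \<sigma> ms' th' x (l - 1) j) = 0" .
      next
        fix i assume i: "i < ms ! l"
        have "avg S (\<lambda>x y. zv \<sigma> \<sigma>' dl ms' th' x y l i * gfac \<sigma> \<sigma>' ms' th' x l i)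
          = avg S (\<lambda>x y. zv \<sigma> \<sigma>' dl ms th x y l i * gfac \<sigma> \<sigma>' ms th x l i)"
          by (rule avg_cong) (use eqs i in simp)
        also have "\<dots> = 0" using critB[OF l1 _ i] lo qL by simp
        finally show "avg S (\<lambda>x y. zv \<sigma> \<sigma>' dl ms' th' x y l i * gfac \<sigma> \<sigma>' ms' th' x l i) = 0" .
      qed
    next
      case hat
      have m1: "ms' ! l = mh" and m2: "ms' ! (l - 1) = ms ! q" using D(1)[of q] D(2) hat by auto
      show ?thesis unfolding m1 m2
      proof (intro conjI allI impI)
        fix i j assume i: "i < mh" and j: "j < ms ! q"
        have "avg S (\<lambda>x y. zv \<sigma> \<sigma>' dl ms' th' x y l i * gfac \<sigma> \<sigma>' ms' th' x l i * fwd \<sigma> ms' th' x (l - 1) j)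
          = avg S (\<lambda>x y. lam i * (\<Sum>i'<ms ! Suc q. fst (th' ! Suc q) i' i *
              (zv \<sigma> \<sigma>' dl ms th x y (Suc q) i' * gfac \<sigma> \<sigma>' ms th x (Suc q) i' * fwd \<sigma> ms th x (Suc q - 1) j)))"
        proof (rule avg_cong)
          fix x y assume "(x, y) \<in> set S"
          then have xX: "x \<in> X" by (rule inX)
          show "zv \<sigma> \<sigma>' dl ms' th' x y l i * gfac \<sigma> \<sigma>' ms' th' x l i * fwd \<sigma> ms' th' x (l - 1) j
            = lam i * (\<Sum>i'<ms ! Suc q. fst (th' ! Suc q) i' i *
              (zv \<sigma> \<sigma>' dl ms th x y (Suc q) i' * gfac \<sigma> \<sigma>' ms th x (Suc q) i' * fwd \<sigma> ms th x (Suc q - 1) j))"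
            unfolding hat Z_hat[OF xX] G_hat[OF xX i] using F_lo[of q x]
            by (simp add: sum_distrib_left sum_distrib_right mult_ac)
        qed
        also have "\<dots> = 0"
          using critW[of "Suc q" _ j] qL j by (simp add: avg_mult avg_sum)
        finally show "avg S (\<lambda>x y. zv \<sigma> \<sigma>' dl ms' th' x y l i * gfac \<sigma> \<sigma>' ms' th' x l i * fwd \<sigma> ms' th' x (l - 1) j) = 0" .
      next
        fix i assume i: "i < mh"
        have "avg S (\<lambda>x y. zv \<sigma> \<sigma>' dl ms' th' x y l i * gfac \<sigma> \<sigma>' ms' th' x l i)
          = avg S (\<lambda>x y. lam i * (\<Sum>i'<ms ! Suc q. fst (th' ! Suc q) i' i *
              (zv \<sigma> \<sigma>' dl ms th x y (Suc q) i' * gfac \<sigma> \<sigma>' ms th x (Suc q) i')))"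
        proof (rule avg_cong)
          fix x y assume "(x, y) \<in> set S"
          then have xX: "x \<in> X" by (rule inX)
          show "zv \<sigma> \<sigma>' dl ms' th' x y l i * gfac \<sigma> \<sigma>' ms' th' x l i
            = lam i * (\<Sum>i'<ms ! Suc q. fst (th' ! Suc q) i' i *
              (zv \<sigma> \<sigma>' dl ms th x y (Suc q) i' * gfac \<sigma> \<sigma>' ms th x (Suc q) i'))"
            unfolding hat Z_hat[OF xX] G_hat[OF xX i]
            by (simp add: sum_distrib_left sum_distrib_right mult_ac)
        qed
        also have "\<dots> = 0"
          using critB[of "Suc q"] qL by (simp add: avg_mult avg_sum)
        finally show "avg S (\<lambda>x y. zv \<sigma> \<sigma>' dl ms' th' x y l i * gfac \<sigma> \<sigma>' ms' th' x l i) = 0" .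
      qed
    next
      case hi
      have m1: "ms' ! l = ms ! k" using D(3)[of k] hi lms by simp
      have B: "avg S (\<lambda>x y. zv \<sigma> \<sigma>' dl ms' th' x y l i * gfac \<sigma> \<sigma>' ms' th' x l i) = 0" if i: "i < ms ! k" for i
      proof -
        have "avg S (\<lambda>x y. zv \<sigma> \<sigma>' dl ms' th' x y l i * gfac \<sigma> \<sigma>' ms' th' x l i)
          = avg S (\<lambda>x y. zv \<sigma> \<sigma>' dl ms th x y k i * gfac \<sigma> \<sigma>' ms th x k i)"
        proof (rule avg_cong)
          fix x y assume "(x, y) \<in> set S"
          then have xX: "x \<in> X" by (rule inX)
          show "zv \<sigma> \<sigma>' dl ms' th' x y l i * gfac \<sigma> \<sigma>' ms' th' x l i = zv \<sigma> \<sigma>' dl ms th x y k i * gfac \<sigma> \<sigma>' ms th x k i"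
            using Z_hi[OF xX hi(3) hi(2), of y] G_hi[OF xX hi(2) hi(3)] i hi(1) by simp
        qed
        also have "\<dots> = 0" using critB[of k i] hi i by simp
        finally show ?thesis .
      qed
      have Wt: "avg S (\<lambda>x y. zv \<sigma> \<sigma>' dl ms' th' x y l i * gfac \<sigma> \<sigma>' ms' th' x l i * fwd \<sigma> ms' th' x (l - 1) j) = 0"
        if i: "i < ms ! k" and j: "j < ms' ! (l - 1)" for i j
      proof (cases "k = Suc q")
        case True
        have jm: "j < mh" using j D(2) hi True by simp
        have "avg S (\<lambda>x y. zv \<sigma> \<sigma>' dl ms' th' x y l i * gfac \<sigma> \<sigma>' ms' th' x l i * fwd \<sigma> ms' th' x (l - 1) j)
          = avg S (\<lambda>x y. lam j * (\<Sum>k'<ms ! q. fst (th' ! q) j k' *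
              (zv \<sigma> \<sigma>' dl ms th x y (Suc q) i * gfac \<sigma> \<sigma>' ms th x (Suc q) i * fwd \<sigma> ms th x (Suc q - 1) k'))
             + (lam j * snd (th' ! q) j + mu j) * (zv \<sigma> \<sigma>' dl ms th x y (Suc q) i * gfac \<sigma> \<sigma>' ms th x (Suc q) i))"
        proof (rule avg_cong)
          fix x y assume "(x, y) \<in> set S"
          then have xX: "x \<in> X" by (rule inX)
          have f: "fwd \<sigma> ms' th' x (l - 1) j = lam j * ((\<Sum>k'<ms ! q. fst (th' ! q) j k' * fwd \<sigma> ms th x q k') + snd (th' ! q) j) + mu j"
          proof -
            have l1': "l - 1 = Suc q" using hi True by simp
            show ?thesis unfolding l1' F_hat2[OF xX] P_eq affine_def using jm by simp
          qed
          show "zv \<sigma> \<sigma>' dl ms' th' x y l i * gfac \<sigma> \<sigma>' ms' th' x l i * fwd \<sigma> ms' th' x (l - 1) j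
            = lam j * (\<Sum>k'<ms ! q. fst (th' ! q) j k' *
              (zv \<sigma> \<sigma>' dl ms th x y (Suc q) i * gfac \<sigma> \<sigma>' ms th x (Suc q) i * fwd \<sigma> ms th x (Suc q - 1) k'))
             + (lam j * snd (th' ! q) j + mu j) * (zv \<sigma> \<sigma>' dl ms th x y (Suc q) i * gfac \<sigma> \<sigma>' ms th x (Suc q) i)"
            unfolding f using Z_hi[OF xX hi(3) hi(2), of y] G_hi[OF xX hi(2) hi(3)] i hi(1) True
            by (simp add: sum_distrib_left sum_distrib_right algebra_simps)
        qed
        also have "\<dots> = 0"
          using critW[of "Suc q" i] critB[of "Suc q" i] qL i True by (simp add: avg_add avg_mult avg_sum)
        finally show ?thesis .
      next
        case False
        then obtain k0 where k0: "k = Suc k0" "Suc q \<le> k0" using hi by (cases k) auto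
        have m2: "ms' ! (l - 1) = ms ! k0" using D(3)[of k0] k0 hi lms by simp
        have "avg S (\<lambda>x y. zv \<sigma> \<sigma>' dl ms' th' x y l i * gfac \<sigma> \<sigma>' ms' th' x l i * fwd \<sigma> ms' th' x (l - 1) j)
          = avg S (\<lambda>x y. zv \<sigma> \<sigma>' dl ms th x y k i * gfac \<sigma> \<sigma>' ms th x k i * fwd \<sigma> ms th x (k - 1) j)"
        proof (rule avg_cong)
          fix x y assume "(x, y) \<in> set S"
          then have xX: "x \<in> X" by (rule inX)
          show "zv \<sigma> \<sigma>' dl ms' th' x y l i * gfac \<sigma> \<sigma>' ms' th' x l i * fwd \<sigma> ms' th' x (l - 1) j
            = zv \<sigma> \<sigma>' dl ms th x y k i * gfac \<sigma> \<sigma>' ms th x k i * fwd \<sigma> ms th x (k - 1) j"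
            using Z_hi[OF xX hi(3) hi(2), of y] G_hi[OF xX hi(2) hi(3)] i hi(1) k0
              F_mid[OF xX k0(2), of] hi(3) by simp
        qed
        also have "\<dots> = 0" using critW[of k i j] hi i j m2 k0 by simp
        finally show ?thesis .
      qed
      show ?thesis unfolding m1 using B Wt by blast
    qed
  qed
  show ?thesis unfolding critical_def len' ms'_def[symmetric] using goal by auto
qed

end
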